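(* Let $E/F$ be a quadratic extension of fields of characteristic $0$, $\beta\in\mathrm{GL}_n(E)$ skew-Hermitian, and $\zeta\in\mathrm{GL}_n(E)$ normal with respect to $\beta$ such that $\beta^{-1}\zeta^*\beta\zeta$ is regular semisimple. Then $T_\zeta=\{(g,h)\in\mathrm{U}_n^\beta(F)\times\mathrm{U}_n^\beta(F):g^{-1}\zeta h=\zeta\}$ is contained in the diagonal $\{(h,h):h\in\mathrm{U}_n^\beta(F)\}$; thus $T_\zeta$ identifies with the centralizer of $\zeta$ in $\mathrm{U}_n^\beta(F)$.
   Context: $g^*={}^t\bar g$ where $\bar{\ }$ is the nontrivial automorphism of $E/F$; $\beta$ skew-Hermitian means $\beta^*=-\beta$; $\mathrm{U}_n^\beta(F)=\{h\in\mathrm{GL}_n(E):h^*\beta h=\beta\}$. $\zeta$ is normal with respect to $\beta$ if $\zeta$ commutes with $\beta^{-1}\zeta^*\beta\zeta$. *)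

theory Defs
  imports "Jordan_Normal_Form.Char_Poly" "Jordan_Normal_Form.Gauss_Jordan_Elimination"
begin

text \<open>The nontrivial automorphism of a quadratic extension E/F: a field involution
  sigma of E different from the identity; F is then its fixed field.\<close>
definition quad_conj :: "('e::field \<Rightarrow> 'e) \<Rightarrow> bool" where
  "quad_conj s \<longleftrightarrow> (\<forall>x y. s (x + y) = s x + s y) \<and> (\<forall>x y. s (x * y) = s x * s y)
     \<and> s 1 = 1 \<and> (\<forall>x. s (s x) = x) \<and> (\<exists>x. s x \<noteq> x)"

definition fixed_field :: "('e \<Rightarrow> 'e) \<Rightarrow> 'e set" where
  "fixed_field s = {x. s x = x}"

definition GL :: "nat \<Rightarrow> 'e::field mat set" where
  "GL n = {A. A \<in> carrier_mat n n \<and> invertible_mat A}"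

definition minv :: "'e::field mat \<Rightarrow> 'e mat" where
  "minv A = the (mat_inverse A)"

definition star :: "('e \<Rightarrow> 'e) \<Rightarrow> 'e mat \<Rightarrow> 'e mat" where
  "star s g = transpose_mat (map_mat s g)"

definition skew_hermitian :: "('e::field \<Rightarrow> 'e) \<Rightarrow> 'e mat \<Rightarrow> bool" where
  "skew_hermitian s b \<longleftrightarrow> star s b = - b"

definition unitary_grp :: "('e::field \<Rightarrow> 'e) \<Rightarrow> nat \<Rightarrow> 'e mat \<Rightarrow> 'e mat set" where
  "unitary_grp s n b = {h \<in> GL n. star s h * b * h = b}"

definition normal_wrt :: "('e::field \<Rightarrow> 'e) \<Rightarrow> 'e mat \<Rightarrow> 'e mat \<Rightarrow> bool" where
  "normal_wrt s b z \<longleftrightarrow>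
     (let m = minv b * star s z * b * z in z * m = m * z)"

text \<open>Regular semisimple element of GL_n(E): the characteristic polynomial is
  separable (distinct eigenvalues over an algebraic closure).\<close>
definition regular_semisimple :: "'e::field mat \<Rightarrow> bool" where
  "regular_semisimple A \<longleftrightarrow> coprime (char_poly A) (pderiv (char_poly A))"

definition T_set :: "('e::field \<Rightarrow> 'e) \<Rightarrow> nat \<Rightarrow> 'e mat \<Rightarrow> 'e mat \<Rightarrow> ('e mat \<times> 'e mat) set" where
  "T_set s n b z = {(g, h). g \<in> unitary_grp s n b \<and> h \<in> unitary_grp s n b \<and> minv g * z * h = z}"

end

theory Submission
  imports Defs "HOL-Algebra.Algebraic_Closure_Type"
begin

unbundle no fps_syntax

definition dg :: "nat \<Rightarrow> (nat \<Rightarrow> 'a) \<Rightarrow> 'a::comm_ring_1 mat" where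
  "dg n f = mat n n (\<lambda>(i,j). if i = j then f i else 0)"

lemma dg_carrier[simp]: "dg n f \<in> carrier_mat n n"
  unfolding dg_def by simp

lemma dg_dims[simp]: "dim_row (dg n f) = n" "dim_col (dg n f) = n"
  unfolding dg_def by simp_all

lemma dg_index[simp]: "i < n \<Longrightarrow> j < n \<Longrightarrow> dg n f $$ (i,j) = (if i = j then f i else 0)"
  unfolding dg_def by simp

lemma mult_dg_right:
  assumes M: "M \<in> carrier_mat m n"
  shows "M * dg n f = mat m n (\<lambda>(i,j). M $$ (i,j) * f j)"
proof (rule eq_matI)
  fix i j assume i: "i < dim_row (mat m n (\<lambda>(i,j). M $$ (i,j) * f j))"
    and j: "j < dim_col (mat m n (\<lambda>(i,j). M $$ (i,j) * f j))"
  hence i: "i < m" and j: "j < n" by auto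
  have "(M * dg n f) $$ (i,j) = (\<Sum>k\<in>{0..<n}. M $$ (i,k) * (if k = j then f j else 0))"
    using M i j by (subst index_mult_mat) (auto simp: scalar_prod_def intro!: sum.cong)
  also have "\<dots> = (\<Sum>k\<in>{0..<n}. if k = j then M $$ (i,j) * f j else 0)"
    by (rule sum.cong) auto
  also have "\<dots> = M $$ (i,j) * f j" using j by simp
  finally show "(M * dg n f) $$ (i,j) = mat m n (\<lambda>(i,j). M $$ (i,j) * f j) $$ (i,j)"
    using i j by simp
qed (use M in auto)

lemma mult_dg_left:
  assumes M: "M \<in> carrier_mat n m"
  shows "dg n f * M = mat n m (\<lambda>(i,j). f i * M $$ (i,j))"
proof (rule eq_matI)
  fix i j assume i: "i < dim_row (mat n m (\<lambda>(i,j). f i * M $$ (i,j)))"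
    and j: "j < dim_col (mat n m (\<lambda>(i,j). f i * M $$ (i,j)))"
  hence i: "i < n" and j: "j < m" by auto
  have "(dg n f * M) $$ (i,j) = (\<Sum>k\<in>{0..<n}. (if i = k then f i else 0) * M $$ (k,j))"
    using M i j by (subst index_mult_mat) (auto simp: scalar_prod_def intro!: sum.cong)
  also have "\<dots> = (\<Sum>k\<in>{0..<n}. if i = k then f i * M $$ (i,j) else 0)"
    by (rule sum.cong) auto
  also have "\<dots> = f i * M $$ (i,j)" using i by simp
  finally show "(dg n f * M) $$ (i,j) = mat n m (\<lambda>(i,j). f i * M $$ (i,j)) $$ (i,j)"
    using i j by simp
qed (use M in auto)

lemma dg_mult: "dg n f * dg n g = dg n (\<lambda>i. f i * g i)"
  by (subst mult_dg_right[OF dg_carrier], rule eq_matI, auto simp: dg_def)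

lemma dg_mult_vec:
  assumes x: "x \<in> carrier_vec n"
  shows "dg n f *\<^sub>v x = vec n (\<lambda>i. f i * x $ i)"
proof (rule eq_vecI)
  fix i assume "i < dim_vec (vec n (\<lambda>i. f i * x $ i))"
  hence i: "i < n" by simp
  have "(dg n f *\<^sub>v x) $ i = (\<Sum>k\<in>{0..<n}. (if i = k then f i else 0) * x $ k)"
    using x i by (auto simp: scalar_prod_def intro!: sum.cong)
  also have "\<dots> = (\<Sum>k\<in>{0..<n}. if i = k then f i * x $ i else 0)"
    by (rule sum.cong) auto
  also have "\<dots> = f i * x $ i" using i by simp
  finally show "(dg n f *\<^sub>v x) $ i = vec n (\<lambda>i. f i * x $ i) $ i" using i by simp
qed (use x in auto)

lemma sf_roots:
  fixes p :: "'a::alg_closed_field poly"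
  assumes sf: "rsquarefree p"
  shows "\<exists>ls. distinct ls \<and> length ls = Polynomial.degree p \<and> (\<forall>x\<in>set ls. poly p x = 0)"
proof -
  have p0: "p \<noteq> 0" using sf unfolding rsquarefree_def by simp
  obtain M where M: "size M = Polynomial.degree p" "p = Polynomial.smult (Polynomial.lead_coeff p) (\<Prod>x\<in>#M. [:-x, 1:])"
    using alg_closed_imp_factorization[OF p0] by blast
  obtain ls where ls: "mset ls = M" using ex_mset by blast
  have cnt: "count M a \<le> 1" for a
  proof (rule ccontr)
    assume "\<not> count M a \<le> 1"
    hence c2: "count M a \<ge> 2" by simp
    have aM: "a \<in># M"
    proof (rule ccontr)
      assume "a \<notin># M"
      hence "count M a = 0" by (simp only: not_in_iff)
      with c2 show False by simp
    qed
    have "a \<in># M - {#a#}" using c2 by (simp add: in_diff_count)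
    hence h2: "add_mset a (M - {#a#} - {#a#}) = M - {#a#}" by (rule insert_DiffM)
    have h1: "add_mset a (M - {#a#}) = M" using aM by (rule insert_DiffM)
    have "M = add_mset a (add_mset a (M - {#a#} - {#a#}))" using h1 h2 by metis
    hence "(\<Prod>x\<in>#M. [:-x, 1:]) = [:-a,1:]^2 * (\<Prod>x\<in>#(M - {#a#} - {#a#}). [:-x, 1:])"
      by (metis (no_types, lifting) image_mset_add_mset prod_mset.add_mset mult.assoc power2_eq_square)
    hence "[:-a,1:]^2 dvd p" using M(2) by (metis dvd_smult dvd_triv_left)
    hence "2 \<le> Polynomial.order a p" using p0 order_divides by blast
    moreover have "Polynomial.order a p = 0 \<or> Polynomial.order a p = 1" using sf unfolding rsquarefree_def by blast
    ultimately show False by linarith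
  qed
  have "distinct ls" unfolding distinct_count_atmost_1 ls
    using cnt ls by (metis One_nat_def count_eq_zero_iff le_SucE le_zero_eq set_mset_mset)
  moreover have "length ls = Polynomial.degree p" using M(1) ls by auto
  moreover have "poly p x = 0" if "x \<in> set ls" for x
  proof -
    have "x \<in># M" using that ls by auto
    hence "[:-x,1:] dvd (\<Prod>x\<in>#M. [:-x, 1:])" by (intro dvd_prod_mset) auto
    hence "[:-x,1:] dvd p" using M(2) by (metis dvd_smult)
    thus ?thesis using poly_eq_0_iff_dvd by blast
  qed
  ultimately show ?thesis by blast
qed

lemma diagonalize:
  fixes A :: "'a::alg_closed_field mat"
  assumes A: "A \<in> carrier_mat n n" and sf: "rsquarefree (char_poly A)"
  shows "\<exists>V W ls. V \<in> carrier_mat n n \<and> W \<in> carrier_mat n n \<and> V * W = 1\<^sub>m n \<and> W * V = 1\<^sub>m n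
     \<and> A * V = V * dg n (\<lambda>j. ls ! j) \<and> distinct ls \<and> length ls = n"
proof -
  let ?c = "char_poly A"
  have mon: "monic ?c" and deg: "Polynomial.degree ?c = n" using degree_monic_char_poly[OF A] by auto
  have c0: "?c \<noteq> 0" using mon by auto
  obtain ls where ls: "distinct ls" "length ls = n" "\<forall>x\<in>set ls. poly ?c x = 0"
    using sf_roots[OF sf] deg by metis
  have len: "length ls = n" using ls(2) .
  have ev: "\<forall>j<n. \<exists>v. eigenvector A v (ls ! j)"
  proof (intro allI impI)
    fix j assume "j < n"
    hence "poly ?c (ls ! j) = 0" using ls(3) len nth_mem by metis
    hence "eigenvalue A (ls ! j)" using eigenvalue_root_char_poly[OF A] by simp
    thus "\<exists>v. eigenvector A v (ls ! j)" unfolding eigenvalue_def .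
  qed
  then obtain vs where vs: "\<And>j. j < n \<Longrightarrow> eigenvector A (vs j) (ls ! j)" by metis
  have vsc: "vs j \<in> carrier_vec n" and vsnz: "vs j \<noteq> 0\<^sub>v n"
    and vse: "A *\<^sub>v vs j = ls ! j \<cdot>\<^sub>v vs j" if "j < n" for j
    using vs[OF that] A unfolding eigenvector_def by auto
  define V where "V = mat n n (\<lambda>(i,j). vs j $ i)"
  have V: "V \<in> carrier_mat n n" unfolding V_def by simp
  have colV: "col V j = vs j" if "j < n" for j
    using vsc[OF that] that unfolding V_def by (auto intro!: eq_vecI)
  have AV: "A * V = V * dg n (\<lambda>j. ls ! j)"
  proof (rule eq_matI)
    fix i j assume "i < dim_row (V * dg n (\<lambda>j. ls ! j))" "j < dim_col (V * dg n (\<lambda>j. ls ! j))"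
    hence i: "i < n" and j: "j < n" using V by auto
    have "(A * V) $$ (i,j) = row A i \<bullet> vs j" using A V i j colV[OF j] by simp
    also have "\<dots> = (A *\<^sub>v vs j) $ i" using A i by simp
    also have "\<dots> = ls ! j * vs j $ i" using vse[OF j] vsc[OF j] i by simp
    also have "\<dots> = (V * dg n (\<lambda>j. ls ! j)) $$ (i,j)"
      using i j by (simp add: mult_dg_right[OF V]) (simp add: V_def)
    finally show "(A * V) $$ (i,j) = (V * dg n (\<lambda>j. ls ! j)) $$ (i,j)" .
  qed (use A V in auto)
  define P where "P ks = foldr (\<lambda>k M. (A - ls ! k \<cdot>\<^sub>m 1\<^sub>m n) * M) ks (1\<^sub>m n)" for ks
  have Pk: "P ks \<in> carrier_mat n n \<and> P ks * V = V * dg n (\<lambda>j. \<Prod>k\<leftarrow>ks. (ls ! j - ls ! k))" for ks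
  proof (induction ks)
    case Nil
    then show ?case using V unfolding P_def
      by (auto simp: mult_dg_right intro!: eq_matI)
  next
    case (Cons k ks)
    let ?M = "A - ls ! k \<cdot>\<^sub>m 1\<^sub>m n"
    have M: "?M \<in> carrier_mat n n" by (intro minus_carrier_mat smult_carrier_mat one_carrier_mat)
    have Peq: "P (k # ks) = ?M * P ks" unfolding P_def by simp
    have MV: "?M * V = V * dg n (\<lambda>j. ls ! j - ls ! k)"
    proof -
      have "?M * V = A * V - (ls ! k \<cdot>\<^sub>m 1\<^sub>m n) * V"
        using A V by (simp add: add_mult_distrib_mat minus_mult_distrib_mat)
      also have "\<dots> = V * dg n (\<lambda>j. ls ! j - ls ! k)"
        unfolding AV using V by (auto simp: mult_dg_right algebra_simps intro!: eq_matI)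
      finally show ?thesis .
    qed
    have "P (k # ks) * V = ?M * (P ks * V)" unfolding Peq
      by (rule assoc_mult_mat[OF M conjunct1[OF Cons.IH] V])
    also have "\<dots> = ?M * V * dg n (\<lambda>j. \<Prod>k\<leftarrow>ks. (ls ! j - ls ! k))"
      unfolding conjunct2[OF Cons.IH] by (rule assoc_mult_mat[OF M V dg_carrier, symmetric])
    also have "\<dots> = V * dg n (\<lambda>j. \<Prod>k\<leftarrow>k # ks. (ls ! j - ls ! k))"
      unfolding MV assoc_mult_mat[OF V dg_carrier dg_carrier] dg_mult by simp
    finally show ?case using Peq M Cons.IH by simp
  qed
  have detV: "det V \<noteq> 0"
  proof
    assume "det V = 0"
    then obtain x where x: "x \<in> carrier_vec n" "x \<noteq> 0\<^sub>v n" "V *\<^sub>v x = 0\<^sub>v n"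
      using det_0_iff_vec_prod_zero_field[OF V] by blast
    have "x $ i = 0" if i: "i < n" for i
    proof -
      define ks where "ks = filter (\<lambda>k. k \<noteq> i) [0..<n]"
      define c where "c j = (\<Prod>k\<leftarrow>ks. (ls ! j - ls ! k))" for j
      have ci: "c i \<noteq> 0" unfolding c_def ks_def using ls(1) len i
        by (auto simp: prod_list_zero_iff nth_eq_iff_index_eq)
      have cj: "c j = 0" if "j < n" "j \<noteq> i" for j
        unfolding c_def ks_def using that by (auto simp: prod_list_zero_iff)
      have PV: "P ks * V = V * dg n c" using Pk[of ks] unfolding c_def by simp
      have Pc: "P ks \<in> carrier_mat n n" using Pk by simp
      have "(P ks * V) *\<^sub>v x = 0\<^sub>v n"
        using Pc V x by (simp add: assoc_mult_mat_vec) (auto intro!: eq_vecI simp: scalar_prod_def)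
      hence "V *\<^sub>v (dg n c *\<^sub>v x) = 0\<^sub>v n"
        unfolding PV assoc_mult_mat_vec[OF V dg_carrier x(1)] .
      moreover have "dg n c *\<^sub>v x = vec n (\<lambda>j. if j = i then c i * x $ i else 0)"
        unfolding dg_mult_vec[OF x(1)] using cj by (auto intro!: eq_vecI)
      ultimately have z: "V *\<^sub>v vec n (\<lambda>j. if j = i then c i * x $ i else 0) = 0\<^sub>v n" by simp
      have "\<forall>r<n. vs i $ r * (c i * x $ i) = 0"
      proof (intro allI impI)
        fix r assume r: "r < n"
        have "0 = (V *\<^sub>v vec n (\<lambda>j. if j = i then c i * x $ i else 0)) $ r" using z r by simp
        also have "\<dots> = (\<Sum>k\<in>{0..<n}. vs k $ r * (if k = i then c i * x $ i else 0))"
          using r V by (auto simp: scalar_prod_def V_def intro!: sum.cong)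
        also have "\<dots> = (\<Sum>k\<in>{0..<n}. if k = i then vs i $ r * (c i * x $ i) else 0)"
          by (rule sum.cong) auto
        also have "\<dots> = vs i $ r * (c i * x $ i)" using i by simp
        finally show "vs i $ r * (c i * x $ i) = 0" by simp
      qed
      moreover obtain r where "r < n" "vs i $ r \<noteq> 0"
        using vsnz[OF i] vsc[OF i] by (metis eq_vecI carrier_vecD index_zero_vec)
      ultimately show "x $ i = 0" using ci by auto
    qed
    hence "x = 0\<^sub>v n" using x(1) by (auto intro!: eq_vecI)
    with x(2) show False by simp
  qed
  have "V \<in> Units (ring_mat TYPE('a) n ())" using det_non_zero_imp_unit[OF V detV] .
  then obtain W where W: "W \<in> carrier_mat n n" "W * V = 1\<^sub>m n" "V * W = 1\<^sub>m n"
    unfolding Units_def ring_mat_def by auto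
  show ?thesis using V W AV ls(1) len by blast
qed

lemma mcn: "A \<in> carrier_mat n n \<Longrightarrow> B \<in> carrier_mat n n \<Longrightarrow> A * B \<in> carrier_mat n n"
  by (rule mult_carrier_mat)

lemma diag_commute:
  fixes A B V W :: "'a::field mat"
  assumes V: "V \<in> carrier_mat n n" and W: "W \<in> carrier_mat n n"
    and VW: "V * W = 1\<^sub>m n" and WV: "W * V = 1\<^sub>m n"
    and A: "A \<in> carrier_mat n n" and B: "B \<in> carrier_mat n n"
    and AV: "A * V = V * dg n f" and inj: "inj_on f {..<n}" and AB: "A * B = B * A"
  shows "W * B * V = dg n (\<lambda>i. (W * B * V) $$ (i,i))"
proof -
  note as = assoc_mult_mat[of _ n n _ n _ n] mcn[of _ n]
  let ?B = "W * B * V"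
  have Bc: "?B \<in> carrier_mat n n" using W B V by simp
  have WAV: "W * A * V = dg n f"
  proof -
    have "W * A * V = W * (A * V)" using W A V by (simp add: as)
    also have "\<dots> = (W * V) * dg n f" unfolding AV using W V by (simp add: as)
    finally show ?thesis using WV by simp
  qed
  have "dg n f * ?B = W * A * B * V"
  proof -
    have "dg n f * ?B = W * A * V * (W * B * V)" unfolding WAV ..
    also have "\<dots> = W * A * (V * W) * B * V" using W A V B by (simp add: as)
    also have "\<dots> = W * A * B * V" unfolding VW using W A B V by (simp add: as)
    finally show ?thesis .
  qed
  moreover have "?B * dg n f = W * B * A * V"
  proof -
    have "?B * dg n f = W * B * V * (W * A * V)" unfolding WAV ..
    also have "\<dots> = W * B * (V * W) * A * V" using W A V B by (simp add: as)
    also have "\<dots> = W * B * A * V" unfolding VW using W A B V by (simp add: as)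
    finally show ?thesis .
  qed
  moreover have "W * A * B * V = W * B * A * V" using W A B V AB by (simp add: as)
  ultimately have comm: "dg n f * ?B = ?B * dg n f" by simp
  show ?thesis
  proof (rule eq_matI)
    fix i j assume "i < dim_row (dg n (\<lambda>i. ?B $$ (i,i)))" "j < dim_col (dg n (\<lambda>i. ?B $$ (i,i)))"
    hence i: "i < n" and j: "j < n" by auto
    have "f i * ?B $$ (i,j) = ?B $$ (i,j) * f j"
      using arg_cong[OF comm, of "\<lambda>M. M $$ (i,j)"] i j Bc
      unfolding mult_dg_left[OF Bc] mult_dg_right[OF Bc] by simp
    hence e: "(f i - f j) * ?B $$ (i,j) = 0" by (simp add: algebra_simps)
    have "i \<noteq> j \<Longrightarrow> f i \<noteq> f j" using inj i j by (auto dest: inj_onD)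
    hence "i \<noteq> j \<Longrightarrow> ?B $$ (i,j) = 0" using e by simp
    thus "?B $$ (i,j) = dg n (\<lambda>i. ?B $$ (i,i)) $$ (i,j)" using i j by auto
  qed (use Bc in auto)
qed

lemma comm_alg_closed:
  fixes A B C :: "'a::alg_closed_field mat"
  assumes A: "A \<in> carrier_mat n n" and B: "B \<in> carrier_mat n n" and C: "C \<in> carrier_mat n n"
    and sf: "rsquarefree (char_poly A)" and AB: "A * B = B * A" and AC: "A * C = C * A"
  shows "B * C = C * B"
proof -
  note as = assoc_mult_mat[of _ n n _ n _ n] mcn[of _ n]
  obtain V W ls where V: "V \<in> carrier_mat n n" and W: "W \<in> carrier_mat n n"
    and VW: "V * W = 1\<^sub>m n" and WV: "W * V = 1\<^sub>m n"
    and AV: "A * V = V * dg n (\<lambda>j. ls ! j)" and dl: "distinct ls" and len: "length ls = n"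
    using diagonalize[OF A sf] by blast
  have inj: "inj_on (\<lambda>j. ls ! j) {..<n}" using dl len by (auto simp: inj_on_def nth_eq_iff_index_eq)
  define b where "b i = (W * B * V) $$ (i,i)" for i
  define c where "c i = (W * C * V) $$ (i,i)" for i
  have Bd: "W * B * V = dg n b" unfolding b_def by (rule diag_commute[OF V W VW WV A B AV inj AB])
  have Cd: "W * C * V = dg n c" unfolding c_def by (rule diag_commute[OF V W VW WV A C AV inj AC])
  have Beq: "B = V * dg n b * W"
  proof -
    have "V * dg n b * W = (V * W) * B * (V * W)" unfolding Bd[symmetric] using V W B by (simp add: as)
    thus ?thesis unfolding VW using B by simp
  qed
  have Ceq: "C = V * dg n c * W"
  proof -
    have "V * dg n c * W = (V * W) * C * (V * W)" unfolding Cd[symmetric] using V W C by (simp add: as)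
    thus ?thesis unfolding VW using C by simp
  qed
  have "B * C = V * (dg n b * (W * V) * dg n c) * W" unfolding Beq Ceq using V W by (simp add: as)
  also have "\<dots> = V * (dg n (\<lambda>i. b i * c i)) * W" unfolding WV by (simp add: dg_mult)
  also have "\<dots> = V * (dg n c * (W * V) * dg n b) * W" unfolding WV by (simp add: dg_mult mult.commute)
  also have "\<dots> = C * B" unfolding Beq Ceq using V W by (simp add: as)
  finally show ?thesis .
qed

interpretation ac: field_hom "to_ac :: 'a::field \<Rightarrow> 'a alg_closure"
  by unfold_locales auto

interpretation acp: map_poly_comm_ring_hom "to_ac :: 'a::field \<Rightarrow> 'a alg_closure" ..

lemma field_poly_bezout:
  fixes p q :: "'a::field poly"
  assumes cop: "coprime p q"
  shows "\<exists>x y. x * p + y * q = 1"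
proof -
  define S where "S = {r. (\<exists>x y. r = x * p + y * q) \<and> r \<noteq> 0}"
  have "p \<noteq> 0 \<or> q \<noteq> 0"
  proof (rule ccontr)
    assume "\<not> (p \<noteq> 0 \<or> q \<noteq> 0)"
    hence "p = 0" "q = 0" by auto
    with cop have "is_unit (0 :: 'a poly)" by simp
    thus False by simp
  qed
  hence "\<exists>r. r \<in> S"
  proof
    assume "p \<noteq> 0"
    hence "p \<in> S" unfolding S_def by (intro CollectI conjI exI[of _ 1] exI[of _ 0]) simp_all
    thus ?thesis by blast
  next
    assume "q \<noteq> 0"
    hence "q \<in> S" unfolding S_def by (intro CollectI conjI exI[of _ 0] exI[of _ 1]) simp_all
    thus ?thesis by blast
  qed
  then obtain r0 where "r0 \<in> S" by blast
  then obtain r where rS: "r \<in> S" and rmin: "\<And>s. s \<in> S \<Longrightarrow> Polynomial.degree r \<le> Polynomial.degree s"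
    using ex_has_least_nat[of "\<lambda>r. r \<in> S" r0 Polynomial.degree] by blast
  obtain x y where rxy: "r = x * p + y * q" and r0: "r \<noteq> 0" using rS unfolding S_def by blast
  have dv: "r dvd z" if z: "z = u * p + v * q" for z u v
  proof (rule ccontr)
    assume nd: "\<not> r dvd z"
    hence m0: "z mod r \<noteq> 0" by (simp add: mod_eq_0_iff_dvd)
    have "z mod r = z - (z div r) * r" by (simp add: minus_div_mult_eq_mod)
    also have "\<dots> = (u - z div r * x) * p + (v - z div r * y) * q"
      unfolding z rxy by (simp add: algebra_simps)
    finally have "z mod r \<in> S" using m0 unfolding S_def by blast
    hence "Polynomial.degree r \<le> Polynomial.degree (z mod r)" by (rule rmin)
    moreover have "Polynomial.degree (z mod r) < Polynomial.degree r"
      using degree_mod_less[where y=r and x=z] r0 m0 by auto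
    ultimately show False by simp
  qed
  have "r dvd p" by (rule dv[of p 1 0]) simp
  moreover have "r dvd q" by (rule dv[of q 0 1]) simp
  ultimately have "is_unit r" using cop coprime_common_divisor by blast
  then obtain k where "1 = r * k" by (rule dvdE)
  hence "(k * x) * p + (k * y) * q = 1" unfolding rxy by (simp add: algebra_simps)
  thus ?thesis by blast
qed

lemma comm_field:
  fixes A B C :: "'a::field_char_0 mat"
  assumes A: "A \<in> carrier_mat n n" and B: "B \<in> carrier_mat n n" and C: "C \<in> carrier_mat n n"
    and cop: "coprime (char_poly A) (pderiv (char_poly A))" and AB: "A * B = B * A" and AC: "A * C = C * A"
  shows "B * C = C * B"
proof -
  let ?h = "map_mat (to_ac :: 'a \<Rightarrow> 'a alg_closure)"
  let ?p = "char_poly A"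
  obtain x y where bz: "x * ?p + y * pderiv ?p = 1"
    using field_poly_bezout[OF cop] by blast
  have cp: "char_poly (?h A) = map_poly to_ac ?p" by (rule ac.char_poly_hom[OF A])
  have bz': "map_poly to_ac x * char_poly (?h A) + map_poly to_ac y * pderiv (char_poly (?h A)) = 1"
    unfolding cp ac.map_poly_pderiv[symmetric] acp.hom_mult[symmetric] acp.hom_add[symmetric] bz by simp
  have sf: "rsquarefree (char_poly (?h A))"
    unfolding rsquarefree_roots
  proof (intro allI notI)
    fix a assume "poly (char_poly (?h A)) a = 0 \<and> poly (pderiv (char_poly (?h A))) a = 0"
    hence "poly (map_poly to_ac x * char_poly (?h A) + map_poly to_ac y * pderiv (char_poly (?h A))) a = 0"
      by simp
    thus False unfolding bz' by simp
  qed
  have "?h B * ?h C = ?h C * ?h B"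
  proof (rule comm_alg_closed[OF _ _ _ sf])
    show "?h A * ?h B = ?h B * ?h A" using A B AB by (metis ac.mat_hom_mult)
    show "?h A * ?h C = ?h C * ?h A" using A C AC by (metis ac.mat_hom_mult)
  qed (use A B C in auto)
  hence "?h (B * C) = ?h (C * B)" using B C by (simp add: ac.mat_hom_mult)
  thus ?thesis by (rule ac.mat_hom_inj)
qed

lemma minv_GL:
  fixes A :: "'a::field mat"
  assumes "A \<in> GL n"
  shows "minv A \<in> carrier_mat n n" "A * minv A = 1\<^sub>m n" "minv A * A = 1\<^sub>m n"
proof -
  have A: "A \<in> carrier_mat n n" and inv: "invertible_mat A" using assms unfolding GL_def by auto
  obtain B where AB: "A * B = 1\<^sub>m n" and BA: "B * A = 1\<^sub>m (dim_row B)"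
    using inv A unfolding invertible_mat_def inverts_mat_def by auto
  have "dim_col B = n" using arg_cong[OF AB, of dim_col] by simp
  moreover have "dim_row B = n" using arg_cong[OF BA, of dim_col] A by simp
  ultimately have B: "B \<in> carrier_mat n n" by auto
  have U: "A \<in> Units (ring_mat TYPE('a) n ())"
    unfolding Units_def ring_mat_def using A B AB BA \<open>dim_row B = n\<close> by auto
  have "mat_inverse A \<noteq> None"
  proof
    assume "mat_inverse A = None"
    from mat_inverse(1)[where b="()", OF A this] U show False by blast
  qed
  then obtain C where C: "mat_inverse A = Some C" by auto
  have "A * C = 1\<^sub>m n \<and> C * A = 1\<^sub>m n \<and> C \<in> carrier_mat n n" by (rule mat_inverse(2)[OF A C])
  thus "minv A \<in> carrier_mat n n" "A * minv A = 1\<^sub>m n" "minv A * A = 1\<^sub>m n"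
    unfolding minv_def C by auto
qed

lemma star_carrier[simp]: "M1 \<in> carrier_mat n n \<Longrightarrow> star s M1 \<in> carrier_mat n n"
  unfolding star_def by auto

lemma star_mult:
  assumes q: "quad_conj s" and M1: "M1 \<in> carrier_mat n n" and M2: "M2 \<in> carrier_mat n n"
  shows "star s (M1 * M2) = star s M2 * star s M1"
proof -
  have s0: "s 0 = 0"
  proof -
    have "s (0 + 0) = s 0 + s 0" using q unfolding quad_conj_def by blast
    hence "s 0 = s 0 + s 0" by (simp only: add_0_right)
    thus ?thesis by (metis add_cancel_right_right)
  qed
  interpret sh: comm_ring_hom s using q s0 unfolding quad_conj_def by unfold_locales auto
  have c1: "map_mat s M1 \<in> carrier_mat n n" using M1 by simp
  have c2: "map_mat s M2 \<in> carrier_mat n n" using M2 by simp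
  show ?thesis unfolding star_def
    by (simp only: sh.mat_hom_mult[OF M1 M2] transpose_mult[OF c1 c2])
qed

lemma key:
  fixes s :: "'e::field_char_0 \<Rightarrow> 'e" and \<beta> \<zeta> g h :: "'e mat"
  assumes q: "quad_conj s"
    and bG: "\<beta> \<in> GL n" and zG: "\<zeta> \<in> GL n" and nrm: "normal_wrt s \<beta> \<zeta>"
    and rs: "regular_semisimple (minv \<beta> * star s \<zeta> * \<beta> * \<zeta>)"
    and T: "(g, h) \<in> T_set s n \<beta> \<zeta>"
  shows "g = h \<and> h * \<zeta> = \<zeta> * h"
proof -
  note as = assoc_mult_mat[of _ n n _ n _ n] mcn[of _ n] right_mult_one_mat[of _ n n] left_mult_one_mat[of _ n n]
  have gG: "g \<in> GL n" and hG: "h \<in> GL n" and gU: "star s g * \<beta> * g = \<beta>"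
    and hU: "star s h * \<beta> * h = \<beta>" and Te: "minv g * \<zeta> * h = \<zeta>"
    using T unfolding T_set_def unitary_grp_def by auto
  have g: "g \<in> carrier_mat n n" and h: "h \<in> carrier_mat n n" and b: "\<beta> \<in> carrier_mat n n"
    and z: "\<zeta> \<in> carrier_mat n n" using gG hG bG zG unfolding GL_def by auto
  note gi = minv_GL[OF gG] and hi = minv_GL[OF hG] and bi = minv_GL[OF bG] and zi = minv_GL[OF zG]
  let ?gi = "minv g" and ?hi = "minv h" and ?bi = "minv \<beta>" and ?zi = "minv \<zeta>"
  let ?gs = "star s g" and ?hs = "star s h" and ?zs = "star s \<zeta>"
  have gs: "?gs \<in> carrier_mat n n" and hs: "?hs \<in> carrier_mat n n" and zs: "?zs \<in> carrier_mat n n"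
    using g h z by auto
  note cs = g h b z gs hs zs gi(1) hi(1) bi(1) zi(1)
  have zh: "\<zeta> * h = g * \<zeta>"
  proof -
    have "g * \<zeta> = g * (?gi * \<zeta> * h)" unfolding Te ..
    also have "\<dots> = (g * ?gi) * \<zeta> * h" using cs by (simp add: as)
    finally show ?thesis unfolding gi(2) using z h by simp
  qed
  have s1: "?hs * ?zs = ?zs * ?gs"
    using star_mult[OF q z h] star_mult[OF q g z] zh by simp
  let ?N = "?zs * \<beta> * \<zeta>"
  have hN: "?hs * ?N * h = ?N"
  proof -
    have "?hs * ?N * h = (?hs * ?zs) * \<beta> * (\<zeta> * h)" using cs by (simp add: as)
    also have "\<dots> = (?zs * ?gs) * \<beta> * (g * \<zeta>)" unfolding s1 zh ..
    also have "\<dots> = ?zs * (?gs * \<beta> * g) * \<zeta>" using cs by (simp add: as)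
    finally show ?thesis unfolding gU .
  qed
  have hb: "?hs * \<beta> = \<beta> * ?hi"
  proof -
    have "?hs * \<beta> = ?hs * \<beta> * (h * ?hi)" unfolding hi(2) using cs by (simp add: as)
    also have "\<dots> = (?hs * \<beta> * h) * ?hi" using cs by (simp add: as)
    finally show ?thesis unfolding hU .
  qed
  have bh: "?bi * ?hs = ?hi * ?bi"
  proof -
    have "?bi * ?hs = ?bi * ?hs * (\<beta> * ?bi)" unfolding bi(2) using cs by (simp add: as)
    also have "\<dots> = ?bi * (?hs * \<beta>) * ?bi" using cs by (simp add: as)
    also have "\<dots> = (?bi * \<beta>) * ?hi * ?bi" unfolding hb using cs by (simp add: as)
    finally show ?thesis unfolding bi(3) using cs by (simp add: as)
  qed
  let ?m = "?bi * ?zs * \<beta> * \<zeta>"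
  have m: "?m \<in> carrier_mat n n" using cs by (simp add: as)
  have hmh: "?hi * ?m * h = ?m"
  proof -
    have "?hi * ?m * h = (?hi * ?bi) * ?N * h" using cs by (simp add: as)
    also have "\<dots> = ?bi * (?hs * ?N * h)" unfolding bh[symmetric] using cs by (simp add: as)
    finally show ?thesis unfolding hN using cs by (simp add: as)
  qed
  have mh: "?m * h = h * ?m"
  proof -
    have "h * ?m = h * (?hi * ?m * h)" unfolding hmh ..
    also have "\<dots> = (h * ?hi) * ?m * h" using cs m by (simp add: as)
    finally show ?thesis unfolding hi(2) using left_mult_one_mat[OF m] by simp
  qed
  have mz: "?m * \<zeta> = \<zeta> * ?m" using nrm unfolding normal_wrt_def Let_def by simp
  have cop: "coprime (char_poly ?m) (pderiv (char_poly ?m))" using rs unfolding regular_semisimple_def .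
  have hz: "h * \<zeta> = \<zeta> * h" by (rule comm_field[OF m h z cop mh mz])
  have "g = g * \<zeta> * ?zi" using cs zi by (simp add: as)
  also have "\<dots> = h * \<zeta> * ?zi" unfolding zh[symmetric] hz ..
  also have "\<dots> = h" using cs zi by (simp add: as)
  finally show ?thesis using hz by simp
qed

theorem mainTheorem10:
  fixes s :: "'e::field_char_0 \<Rightarrow> 'e" and n :: nat and \<beta> \<zeta> :: "'e mat"
  assumes "quad_conj s"
    and "\<beta> \<in> GL n" and "skew_hermitian s \<beta>"
    and "\<zeta> \<in> GL n" and "normal_wrt s \<beta> \<zeta>"
    and "regular_semisimple (minv \<beta> * star s \<zeta> * \<beta> * \<zeta>)"
  shows "T_set s n \<beta> \<zeta> \<subseteq> {(h, h) | h. h \<in> unitary_grp s n \<beta>}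
    \<and> T_set s n \<beta> \<zeta> = {(h, h) | h. h \<in> unitary_grp s n \<beta> \<and> h * \<zeta> = \<zeta> * h}"
proof -
  have K: "g = h \<and> h * \<zeta> = \<zeta> * h" if "(g, h) \<in> T_set s n \<beta> \<zeta>" for g h
    using key[OF assms(1,2,4,5,6) that] .
  have sub1: "T_set s n \<beta> \<zeta> \<subseteq> {(h, h) | h. h \<in> unitary_grp s n \<beta> \<and> h * \<zeta> = \<zeta> * h}"
  proof
    fix p assume p: "p \<in> T_set s n \<beta> \<zeta>"
    obtain g h where gh: "p = (g, h)" by (cases p)
    from K[OF p[unfolded gh]] p[unfolded gh] show "p \<in> {(h, h) | h. h \<in> unitary_grp s n \<beta> \<and> h * \<zeta> = \<zeta> * h}"
      unfolding gh T_set_def by auto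
  qed
  have sub2: "{(h, h) | h. h \<in> unitary_grp s n \<beta> \<and> h * \<zeta> = \<zeta> * h} \<subseteq> T_set s n \<beta> \<zeta>"
  proof
    fix p assume "p \<in> {(h, h) | h. h \<in> unitary_grp s n \<beta> \<and> h * \<zeta> = \<zeta> * h}"
    then obtain h where p: "p = (h, h)" and hU: "h \<in> unitary_grp s n \<beta>" and hz: "h * \<zeta> = \<zeta> * h" by auto
    have hG: "h \<in> GL n" using hU unfolding unitary_grp_def by auto
    have h: "h \<in> carrier_mat n n" and z: "\<zeta> \<in> carrier_mat n n" using hG assms(4) unfolding GL_def by auto
    note hi = minv_GL[OF hG]
    have "minv h * \<zeta> * h = minv h * (\<zeta> * h)" using hi(1) z h by (simp add: assoc_mult_mat)
    also have "\<dots> = minv h * h * \<zeta>" unfolding hz[symmetric] using hi(1) z h by (simp add: assoc_mult_mat)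
    finally have "minv h * \<zeta> * h = \<zeta>" unfolding hi(3) using z by simp
    thus "p \<in> T_set s n \<beta> \<zeta>" unfolding p T_set_def using hU by auto
  qed
  show ?thesis using sub1 sub2 by blast
qed

end
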